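(* Let $K,L>0$, let $A(p,q)=(p^2q)^{1/3}$ and $A^\delta(p,q)=\operatorname{sgn}(q)\min\left(\lvert A(p,q)\rvert,K\lvert p\rvert,L\lvert q\rvert\right)$. Define $A^{\delta,+}(p,q)=A^\delta(p^+,q^+)$ and $A^{\delta,-}(p,q)=A^\delta(p^-,q^-)$. Then \[ -A^\delta(p,q)=A^{\delta,+}(\lvert p\rvert,-q)+A^{\delta,-}(-\lvert p\rvert,-q)\quad\text{for all }p,q\in\mathbb R, \] and $A^{\delta,+}\in ND^+(\mathbb R^2)$, $A^{\delta,-}\in ND^-(\mathbb R^2)$.
   Context: Real cube root; $\operatorname{sgn}(q)=q/\lvert q\rvert$ for $q\ne0$ and $\operatorname{sgn}(0)=0$; $x^+=\max(x,0)$, $x^-=\min(x,0)$. For $x,y\in\mathbb R^N$, $x\le y$ means componentwise; $F\in ND(\mathbb R^N)$ means $x\le y\Rightarrow F(x)\le F(y)$; $ND^+(\mathbb R^N)$ (resp. $ND^-(\mathbb R^N)$) are the nondecreasing functions with values in $[0,\infty)$ (resp. $(-\infty,0]$). *)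

theory Defs
  imports Complex_Main
begin

text \<open>Real cube root: root 3 is the real (odd) root, defined also for negative arguments.\<close>
definition A :: "real \<Rightarrow> real \<Rightarrow> real" where
  "A p q = root 3 (p^2 * q)"

definition Adelta :: "real \<Rightarrow> real \<Rightarrow> real \<Rightarrow> real \<Rightarrow> real" where
  "Adelta K L p q = sgn q * min \<bar>A p q\<bar> (min (K * \<bar>p\<bar>) (L * \<bar>q\<bar>))"

definition Adelta_plus :: "real \<Rightarrow> real \<Rightarrow> real \<Rightarrow> real \<Rightarrow> real" where
  "Adelta_plus K L p q = Adelta K L (max p 0) (max q 0)"

definition Adelta_minus :: "real \<Rightarrow> real \<Rightarrow> real \<Rightarrow> real \<Rightarrow> real" where
  "Adelta_minus K L p q = Adelta K L (min p 0) (min q 0)"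

definition ND2 :: "(real \<Rightarrow> real \<Rightarrow> real) \<Rightarrow> bool" where
  "ND2 F \<longleftrightarrow> (\<forall>p1 q1 p2 q2. p1 \<le> p2 \<and> q1 \<le> q2 \<longrightarrow> F p1 q1 \<le> F p2 q2)"

definition ND2_plus :: "(real \<Rightarrow> real \<Rightarrow> real) \<Rightarrow> bool" where
  "ND2_plus F \<longleftrightarrow> ND2 F \<and> (\<forall>p q. F p q \<ge> 0)"

definition ND2_minus :: "(real \<Rightarrow> real \<Rightarrow> real) \<Rightarrow> bool" where
  "ND2_minus F \<longleftrightarrow> ND2 F \<and> (\<forall>p q. F p q \<le> 0)"

end

theory Submission
  imports Defs
begin

lemma A_even: "A (-p) q = A p q" by (simp add: A_def)
lemma A_odd: "A p (-q) = - A p q" by (simp add: A_def real_root_minus)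
lemma Ad_even: "Adelta K L (-p) q = Adelta K L p q" by (simp add: Adelta_def A_even)
lemma Ad_abs: "Adelta K L \<bar>p\<bar> q = Adelta K L p q"
  by (cases "p \<ge> 0") (auto simp: Ad_even)
lemma Ad_odd: "Adelta K L p (-q) = - Adelta K L p q"
  by (simp add: Adelta_def A_odd sgn_minus)
lemma Ad_zero: "Adelta K L p 0 = 0" by (simp add: Adelta_def)

lemma Ad_nonneg:
  assumes "K > 0" "L > 0" "q \<ge> 0"
  shows "Adelta K L p q \<ge> 0"
  using assms by (cases "q = 0") (auto simp: Adelta_def)

lemma Ad_mono:
  assumes K: "K > 0" and L: "L > 0" and "0 \<le> p1" "p1 \<le> p2" "0 \<le> q1" "q1 \<le> q2"
  shows "Adelta K L p1 q1 \<le> Adelta K L p2 q2"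
proof (cases "q1 = 0")
  case True then show ?thesis using Ad_nonneg[OF K L, of q2 p2] assms by (simp add: Ad_zero)
next
  case False
  hence q1: "q1 > 0" "q2 > 0" using assms by auto
  have a1: "\<bar>A p1 q1\<bar> = root 3 (p1^2*q1)" using assms by (simp add: A_def)
  have a2: "\<bar>A p2 q2\<bar> = root 3 (p2^2*q2)" using assms by (simp add: A_def)
  have "p1^2 \<le> p2^2" using assms by (simp add: power_mono)
  hence "p1^2*q1 \<le> p2^2*q2" using assms by (meson mult_mono zero_le_power2 order_trans)
  hence r: "root 3 (p1^2*q1) \<le> root 3 (p2^2*q2)" by simp
  have "K*p1 \<le> K*p2" "L*q1 \<le> L*q2" using assms by auto
  then show ?thesis using q1 r a1 a2 assms by (simp add: Adelta_def min.coboundedI1 min.coboundedI2 min.mono)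
qed

theorem mainTheorem6:
  fixes K L :: real
  assumes "K > 0" and "L > 0"
  shows "(\<forall>p q. - Adelta K L p q
             = Adelta_plus K L \<bar>p\<bar> (- q) + Adelta_minus K L (- \<bar>p\<bar>) (- q))
         \<and> ND2_plus (Adelta_plus K L) \<and> ND2_minus (Adelta_minus K L)"
proof (intro conjI allI)
  fix p q :: real
  have e: "- Adelta K L p q = Adelta K L \<bar>p\<bar> (-q)" by (simp add: Ad_odd Ad_abs)
  show "- Adelta K L p q = Adelta_plus K L \<bar>p\<bar> (- q) + Adelta_minus K L (- \<bar>p\<bar>) (- q)"
    unfolding e Adelta_plus_def Adelta_minus_def
    by (cases "q \<le> 0") (auto simp: Ad_zero Ad_even min_def max_def)
next
  show "ND2_plus (Adelta_plus K L)"
    unfolding ND2_plus_def ND2_def Adelta_plus_def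
    using Ad_mono[OF assms] Ad_nonneg[OF assms]
    by (auto intro!: Ad_mono[OF assms] Ad_nonneg[OF assms] max.mono)
next
  have m: "Adelta K L (min p 0) (min q 0) = - Adelta K L (max (-p) 0) (max (-q) 0)" for p q
  proof -
    have "min q 0 = - max (-q) 0" "min p 0 = - max (-p) 0" by auto
    then show ?thesis by (simp add: Ad_odd Ad_even)
  qed
  show "ND2_minus (Adelta_minus K L)"
    unfolding ND2_minus_def ND2_def Adelta_minus_def m
    by (auto intro!: Ad_mono[OF assms] Ad_nonneg[OF assms] max.mono)
qed

end
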